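(* Let $k\geq 0$ and $n\geq k$ be integers, and let $G$ be a $k$-degenerate graph of order $n$. Then $q(G)<q(S_{n,k})$, unless $G=S_{n,k}$.
   Context: All graphs are finite and simple. A graph $G$ is $k$-degenerate if every subgraph of $G$ contains a vertex of degree at most $k$. $S_{n,k}$ denotes the join of a complete graph of order $k$ and an independent set of order $n-k$. For a graph $H$, $q(H)$ denotes the largest eigenvalue of the signless Laplacian $Q(H)=D(H)+A(H)$, where $A(H)$ is the adjacency matrix and $D(H)$ the diagonal matrix of vertex degrees. *)

theory Defs
  imports "Jordan_Normal_Form.Char_Poly"
begin

definition simple_graph :: "nat \<Rightarrow> (nat \<Rightarrow> nat \<Rightarrow> bool) \<Rightarrow> bool" where
  "simple_graph n E \<longleftrightarrow>
     (\<forall>u v. E u v \<longrightarrow> u < n \<and> v < n) \<and>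
     (\<forall>u v. E u v \<longrightarrow> E v u) \<and> (\<forall>u. \<not> E u u)"

definition degenerate :: "nat \<Rightarrow> nat \<Rightarrow> (nat \<Rightarrow> nat \<Rightarrow> bool) \<Rightarrow> bool" where
  "degenerate k n E \<longleftrightarrow>
     (\<forall>U F. U \<subseteq> {0..<n} \<longrightarrow> U \<noteq> {} \<longrightarrow>
        (\<forall>u v. F u v \<longrightarrow> E u v \<and> u \<in> U \<and> v \<in> U) \<longrightarrow>
        (\<forall>u v. F u v \<longrightarrow> F v u) \<longrightarrow>
        (\<exists>v\<in>U. card {u \<in> U. F v u} \<le> k))"

text \<open>S_{n,k}: join of K_k (vertices 0..k-1) and an independent set (vertices k..n-1).\<close>
definition S_graph :: "nat \<Rightarrow> nat \<Rightarrow> nat \<Rightarrow> nat \<Rightarrow> bool" where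
  "S_graph n k u v \<longleftrightarrow> u < n \<and> v < n \<and> u \<noteq> v \<and> (u < k \<or> v < k)"

definition graph_iso :: "nat \<Rightarrow> (nat \<Rightarrow> nat \<Rightarrow> bool) \<Rightarrow> (nat \<Rightarrow> nat \<Rightarrow> bool) \<Rightarrow> bool" where
  "graph_iso n E1 E2 \<longleftrightarrow>
     (\<exists>f. bij_betw f {0..<n} {0..<n} \<and> (\<forall>u<n. \<forall>v<n. E1 u v \<longleftrightarrow> E2 (f u) (f v)))"

definition degree :: "nat \<Rightarrow> (nat \<Rightarrow> nat \<Rightarrow> bool) \<Rightarrow> nat \<Rightarrow> nat" where
  "degree n E v = card {u. u < n \<and> E v u}"

definition signless_laplacian :: "nat \<Rightarrow> (nat \<Rightarrow> nat \<Rightarrow> bool) \<Rightarrow> real mat" where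
  "signless_laplacian n E =
     mat n n (\<lambda>(i, j). (if i = j then real (degree n E i) else 0) + (if E i j then 1 else 0))"

definition q_index :: "nat \<Rightarrow> (nat \<Rightarrow> nat \<Rightarrow> bool) \<Rightarrow> real" where
  "q_index n E = Max {x. eigenvalue (signless_laplacian n E) x}"

end

theory Submission
  imports Defs "Jordan_Normal_Form.Spectral_Radius"
begin

lemma SL_carrier: "signless_laplacian n E \<in> carrier_mat n n"
  unfolding signless_laplacian_def by auto

lemma SL_mult:
  assumes v: "v \<in> carrier_vec n" and i: "i < n"
  shows "(signless_laplacian n E *\<^sub>v v) $ i
        = real (degree n E i) * v$i + (\<Sum>j\<in>{j. j<n \<and> E i j}. v$j)"
proof -
  have "(signless_laplacian n E *\<^sub>v v) $ i
      = (\<Sum>j = 0..<n. ((if i = j then real (degree n E i) else 0) + (if E i j then 1 else 0)) * v $ j)"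
    using v i unfolding signless_laplacian_def
    by (auto simp: scalar_prod_def intro!: sum.cong)
  also have "\<dots> = (\<Sum>j = 0..<n. (if i = j then real (degree n E i) * v $ j else 0))
                 + (\<Sum>j = 0..<n. (if E i j then v $ j else 0))"
    unfolding sum.distrib[symmetric] by (rule sum.cong) (auto simp: distrib_right)
  also have "(\<Sum>j = 0..<n. (if i = j then real (degree n E i) * v $ j else 0)) = real (degree n E i) * v$i"
    using i by simp
  also have "(\<Sum>j = 0..<n. (if E i j then v $ j else 0)) = (\<Sum>j\<in>{j\<in>{0..<n}. E i j}. v$j)"
    by (subst sum.inter_filter) auto
  also have "{j\<in>{0..<n}. E i j} = {j. j<n \<and> E i j}" by auto
  finally show ?thesis .
qed

lemma eig_to_fun:
  assumes "eigenvalue (signless_laplacian n E) lam"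
  shows "\<exists>x. (\<exists>i<n. x i \<noteq> 0) \<and>
     (\<forall>i<n. real (degree n E i) * x i + (\<Sum>j\<in>{j. j<n \<and> E i j}. x j) = lam * x i)"
proof -
  from assms obtain v where ev: "eigenvector (signless_laplacian n E) v lam"
    unfolding eigenvalue_def by auto
  have dr: "dim_row (signless_laplacian n E) = n" unfolding signless_laplacian_def by simp
  from ev have v: "v \<in> carrier_vec n" and nz: "v \<noteq> 0\<^sub>v n"
    and eq: "signless_laplacian n E *\<^sub>v v = lam \<cdot>\<^sub>v v"
    unfolding eigenvector_def dr by auto
  have "\<exists>i<n. v $ i \<noteq> 0"
  proof (rule ccontr)
    assume "\<not> ?thesis"
    hence "v = 0\<^sub>v n" using v by (intro eq_vecI) auto
    with nz show False by simp
  qed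
  moreover have "\<forall>i<n. real (degree n E i) * v $ i + (\<Sum>j\<in>{j. j<n \<and> E i j}. v $ j) = lam * v $ i"
  proof (intro allI impI)
    fix i assume i: "i < n"
    have "(signless_laplacian n E *\<^sub>v v) $ i = (lam \<cdot>\<^sub>v v) $ i" using eq by simp
    thus "real (degree n E i) * v $ i + (\<Sum>j\<in>{j. j<n \<and> E i j}. v $ j) = lam * v $ i"
      using SL_mult[OF v i, of E] i v by simp
  qed
  ultimately show ?thesis by blast
qed

lemma fun_to_eig:
  assumes nz: "\<exists>i<n. x i \<noteq> 0"
    and eq: "\<forall>i<n. real (degree n E i) * x i + (\<Sum>j\<in>{j. j<n \<and> E i j}. x j) = lam * x i"
  shows "eigenvalue (signless_laplacian n E) lam"
proof -
  let ?v = "vec n x"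
  have v: "?v \<in> carrier_vec n" by simp
  have dr: "dim_row (signless_laplacian n E) = n" unfolding signless_laplacian_def by simp
  have "signless_laplacian n E *\<^sub>v ?v = lam \<cdot>\<^sub>v ?v"
  proof (rule eq_vecI)
    fix i assume "i < dim_vec (lam \<cdot>\<^sub>v ?v)"
    hence i: "i < n" by simp
    show "(signless_laplacian n E *\<^sub>v ?v) $ i = (lam \<cdot>\<^sub>v ?v) $ i"
      using SL_mult[OF v i, of E] i eq by simp
  qed (simp add: dr)
  moreover have "?v \<noteq> 0\<^sub>v n" using nz
    by (metis index_vec index_zero_vec(1))
  ultimately show ?thesis unfolding eigenvalue_def eigenvector_def dr using v by blast
qed

lemma mult_comp:
  assumes "A \<in> carrier_mat n n" "v \<in> carrier_vec n" "i < n"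
  shows "(A *\<^sub>v v) $ i = (\<Sum>j<n. A $$ (i,j) * v $ j)"
  using assms by (auto simp: scalar_prod_def lessThan_atLeast0 intro!: sum.cong)

lemma real_fun_eig:
  assumes A: "(A :: real mat) \<in> carrier_mat n n"
    and nz: "\<exists>i<n. x i \<noteq> 0"
    and eq: "\<forall>i<n. (\<Sum>j<n. A $$ (i,j) * x j) = lam * x i"
  shows "eigenvalue A lam"
proof -
  let ?v = "vec n x"
  have v: "?v \<in> carrier_vec n" by simp
  have dr: "dim_row A = n" using A by simp
  have "A *\<^sub>v ?v = lam \<cdot>\<^sub>v ?v"
  proof (rule eq_vecI)
    fix i assume "i < dim_vec (lam \<cdot>\<^sub>v ?v)"
    hence i: "i < n" by simp
    show "(A *\<^sub>v ?v) $ i = (lam \<cdot>\<^sub>v ?v) $ i"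
      using mult_comp[OF A v i] i eq by simp
  qed (simp add: dr)
  moreover have "?v \<noteq> 0\<^sub>v n" using nz
    by (metis index_vec index_zero_vec(1))
  ultimately show ?thesis unfolding eigenvalue_def eigenvector_def dr using v by blast
qed

lemma sym_real_eig_exists:
  assumes A: "(A :: real mat) \<in> carrier_mat n n" and n: "0 < n"
    and sym: "\<And>i j. i < n \<Longrightarrow> j < n \<Longrightarrow> A $$ (i,j) = A $$ (j,i)"
  shows "\<exists>lam. eigenvalue A lam"
proof -
  let ?Ac = "map_mat complex_of_real A"
  have Ac: "?Ac \<in> carrier_mat n n" using A by simp
  from spectrum_non_empty[OF Ac n] obtain mu where "eigenvalue ?Ac mu"
    unfolding spectrum_def by auto
  then obtain v where ev: "eigenvector ?Ac v mu" unfolding eigenvalue_def by auto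
  have dr: "dim_row ?Ac = n" using A by simp
  from ev have v: "v \<in> carrier_vec n" and vnz: "v \<noteq> 0\<^sub>v n"
    and eqv: "?Ac *\<^sub>v v = mu \<cdot>\<^sub>v v"
    unfolding eigenvector_def dr by auto
  have nzi: "\<exists>i<n. v $ i \<noteq> 0"
  proof (rule ccontr)
    assume "\<not> ?thesis"
    hence "v = 0\<^sub>v n" using v by (intro eq_vecI) auto
    with vnz show False by simp
  qed
  define a where "a i j = A $$ (i,j)" for i j
  have comp: "(\<Sum>j<n. complex_of_real (a i j) * v $ j) = mu * v $ i" if i: "i < n" for i
  proof -
    have "(?Ac *\<^sub>v v) $ i = (mu \<cdot>\<^sub>v v) $ i" using eqv by simp
    thus ?thesis using mult_comp[OF Ac v i] i v A by (simp add: a_def)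
  qed
  define W where "W = (\<Sum>i<n. cnj (v$i) * (\<Sum>j<n. complex_of_real (a i j) * v $ j))"
  define s where "s = (\<Sum>i<n. cnj (v$i) * v$i)"
  have "W = (\<Sum>i<n. cnj (v$i) * (mu * v $ i))" unfolding W_def
    by (rule sum.cong) (simp_all add: comp)
  hence Wmu: "W = mu * s" unfolding s_def by (simp add: sum_distrib_left mult_ac)
  have W2: "W = (\<Sum>i<n. \<Sum>j<n. complex_of_real (a i j) * cnj (v$i) * v $ j)"
    unfolding W_def by (simp add: sum_distrib_left mult_ac)
  have "cnj W = (\<Sum>i<n. \<Sum>j<n. complex_of_real (a i j) * v$i * cnj (v $ j))"
    unfolding W2 by (simp add: cnj_sum mult_ac)
  also have "\<dots> = (\<Sum>j<n. \<Sum>i<n. complex_of_real (a i j) * v$i * cnj (v $ j))"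
    by (rule sum.swap)
  also have "\<dots> = W" unfolding W2
    by (intro sum.cong refl) (auto simp: a_def sym mult_ac)
  finally have "cnj W = W" .
  hence ImW: "Im W = 0" by (metis cnj.simps(2) complex_cnj_cancel_iff neg_equal_zero)
  have s_eq: "s = complex_of_real (\<Sum>i<n. (cmod (v$i))^2)"
    unfolding s_def of_real_sum by (rule sum.cong) (simp_all only: complex_norm_square mult.commute)
  obtain i0 where i0: "i0 < n" "v $ i0 \<noteq> 0" using nzi by auto
  have "(\<Sum>i<n. (cmod (v$i))^2) > 0"
  proof -
    have "(cmod (v$i0))^2 \<le> (\<Sum>i<n. (cmod (v$i))^2)"
      using i0 by (intro member_le_sum) auto
    moreover have "(cmod (v$i0))^2 > 0" using i0 by simp
    ultimately show ?thesis by linarith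
  qed
  hence Res: "Re s > 0" and Ims: "Im s = 0" unfolding s_eq by auto
  have "Im W = Im mu * Re s" using Wmu Ims by simp
  hence Immu: "Im mu = 0" using ImW Res by simp
  let ?r = "Re mu"
  have reeq: "(\<Sum>j<n. a i j * Re (v $ j)) = ?r * Re (v $ i)" if "i < n" for i
  proof -
    have "Re (\<Sum>j<n. complex_of_real (a i j) * v $ j) = Re (mu * v $ i)" using comp[OF that] by simp
    thus ?thesis using Immu by (simp add: Re_sum)
  qed
  have imeq: "(\<Sum>j<n. a i j * Im (v $ j)) = ?r * Im (v $ i)" if "i < n" for i
  proof -
    have "Im (\<Sum>j<n. complex_of_real (a i j) * v $ j) = Im (mu * v $ i)" using comp[OF that] by simp
    thus ?thesis using Immu by (simp add: Im_sum)
  qed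
  show ?thesis
  proof (cases "\<exists>i<n. Re (v $ i) \<noteq> 0")
    case True
    have "eigenvalue A ?r"
      by (rule real_fun_eig[OF A True]) (use reeq in \<open>simp add: a_def\<close>)
    thus ?thesis by blast
  next
    case False
    have "\<exists>i<n. Im (v $ i) \<noteq> 0"
      using i0 False complex_eqI by (metis zero_complex.simps)
    hence "eigenvalue A ?r"
      by (rule real_fun_eig[OF A]) (use imeq in \<open>simp add: a_def\<close>)
    thus ?thesis by blast
  qed
qed

lemma CW:
  fixes y x dd :: "nat \<Rightarrow> real" and Nb :: "nat \<Rightarrow> nat set"
  assumes Nb: "\<And>i. i < n \<Longrightarrow> Nb i \<subseteq> {..<n}"
    and dd: "\<And>i. i < n \<Longrightarrow> dd i \<ge> 0"
    and ypos: "\<And>i. i < n \<Longrightarrow> y i > 0"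
    and ineq: "\<And>i. i < n \<Longrightarrow> dd i * y i + (\<Sum>j\<in>Nb i. y j) \<le> cq * y i"
    and nz: "\<exists>i<n. x i \<noteq> 0"
    and eq: "\<And>i. i < n \<Longrightarrow> dd i * x i + (\<Sum>j\<in>Nb i. x j) = lam * x i"
  shows "lam \<le> cq"
    and "lam = cq \<Longrightarrow> \<exists>M. M \<noteq> {} \<and> M \<subseteq> {..<n} \<and> (\<forall>i\<in>M. Nb i \<subseteq> M)
            \<and> (\<forall>i\<in>M. dd i * y i + (\<Sum>j\<in>Nb i. y j) = cq * y i)"
proof -
  have finNb: "finite (Nb i)" if "i < n" for i using Nb[OF that] finite_subset by blast
  define R where "R = (\<lambda>i. \<bar>x i\<bar> / y i) ` {..<n}"
  obtain i1 where i1: "i1 < n" "x i1 \<noteq> 0" using nz by auto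
  have Rfin: "finite R" and Rne: "R \<noteq> {}" unfolding R_def using i1 by auto
  define t where "t = Max R"
  obtain i0 where i0: "i0 < n" "t = \<bar>x i0\<bar> / y i0"
    using Max_in[OF Rfin Rne] unfolding t_def R_def by auto
  have le: "\<bar>x j\<bar> \<le> t * y j" if "j < n" for j
  proof -
    have "\<bar>x j\<bar> / y j \<le> t" unfolding t_def using Rfin that by (auto simp: R_def)
    thus ?thesis using ypos[OF that] by (simp add: divide_le_eq)
  qed
  have "\<bar>x i1\<bar> / y i1 > 0" using i1 ypos[OF i1(1)] by simp
  moreover have "\<bar>x i1\<bar> / y i1 \<le> t" unfolding t_def using Rfin i1 by (auto simp: R_def)
  ultimately have tpos: "t > 0" by linarith
  define M where "M = {i. i < n \<and> \<bar>x i\<bar> = t * y i}"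
  have i0M: "i0 \<in> M" unfolding M_def using i0 ypos[OF i0(1)] by simp
  have chain: "\<bar>lam\<bar> * (t * y i) \<le> dd i * (t * y i) + (\<Sum>j\<in>Nb i. \<bar>x j\<bar>)"
    and chain2: "(\<Sum>j\<in>Nb i. \<bar>x j\<bar>) \<le> (\<Sum>j\<in>Nb i. t * y j)"
    and chain3: "dd i * (t * y i) + (\<Sum>j\<in>Nb i. t * y j) \<le> cq * (t * y i)"
    if iM: "i \<in> M" for i
  proof -
    have i: "i < n" and xi: "\<bar>x i\<bar> = t * y i" using iM unfolding M_def by auto
    have a1: "\<bar>lam\<bar> * (t * y i) = \<bar>dd i * x i + (\<Sum>j\<in>Nb i. x j)\<bar>"
      using xi eq[OF i] by (simp add: abs_mult)
    have a2: "\<bar>dd i * x i + (\<Sum>j\<in>Nb i. x j)\<bar> \<le> \<bar>dd i * x i\<bar> + \<bar>\<Sum>j\<in>Nb i. x j\<bar>"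
      by (rule abs_triangle_ineq)
    have a3: "\<bar>\<Sum>j\<in>Nb i. x j\<bar> \<le> (\<Sum>j\<in>Nb i. \<bar>x j\<bar>)" by (rule sum_abs)
    have a4: "\<bar>dd i * x i\<bar> = dd i * (t * y i)" using dd[OF i] xi by (simp add: abs_mult)
    show "\<bar>lam\<bar> * (t * y i) \<le> dd i * (t * y i) + (\<Sum>j\<in>Nb i. \<bar>x j\<bar>)"
      using a1 a2 a3 a4 by linarith
    show "(\<Sum>j\<in>Nb i. \<bar>x j\<bar>) \<le> (\<Sum>j\<in>Nb i. t * y j)"
      by (rule sum_mono) (use le Nb[OF i] in auto)
    have "dd i * (t * y i) + (\<Sum>j\<in>Nb i. t * y j) = t * (dd i * y i + (\<Sum>j\<in>Nb i. y j))"
      by (simp add: sum_distrib_left algebra_simps)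
    also have "\<dots> \<le> t * (cq * y i)" by (rule mult_left_mono[OF ineq[OF i]]) (use tpos in simp)
    finally show "dd i * (t * y i) + (\<Sum>j\<in>Nb i. t * y j) \<le> cq * (t * y i)" by (simp add: mult_ac)
  qed
  have ty0: "t * y i0 > 0" using tpos ypos[OF i0(1)] by simp
  have "\<bar>lam\<bar> * (t * y i0) \<le> cq * (t * y i0)"
    using chain[OF i0M] chain2[OF i0M] chain3[OF i0M] by linarith
  hence abs_le: "\<bar>lam\<bar> \<le> cq" using ty0 by (rule mult_right_le_imp_le)
  thus "lam \<le> cq" by simp
  assume lc: "lam = cq"
  have cq0: "cq \<ge> 0" using abs_le by simp
  have closed: "Nb i \<subseteq> M" and eqM: "dd i * y i + (\<Sum>j\<in>Nb i. y j) = cq * y i" if iM: "i \<in> M" for i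
  proof -
    have i: "i < n" using iM unfolding M_def by auto
    have a: "\<bar>lam\<bar> * (t * y i) = cq * (t * y i)" using lc cq0 by simp
    have e2: "(\<Sum>j\<in>Nb i. \<bar>x j\<bar>) = (\<Sum>j\<in>Nb i. t * y j)"
      using chain[OF iM] chain2[OF iM] chain3[OF iM] a by linarith
    have e3: "dd i * (t * y i) + (\<Sum>j\<in>Nb i. t * y j) = cq * (t * y i)"
      using chain[OF iM] chain2[OF iM] chain3[OF iM] a by linarith
    have s0: "(\<Sum>j\<in>Nb i. t * y j - \<bar>x j\<bar>) = 0" using e2 by (simp add: sum_subtractf)
    have nn: "\<And>j. j \<in> Nb i \<Longrightarrow> t * y j - \<bar>x j\<bar> \<ge> 0" using le Nb[OF i] by auto
    have "\<forall>j\<in>Nb i. t * y j - \<bar>x j\<bar> = 0"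
      using iffD1[OF sum_nonneg_eq_0_iff[OF finNb[OF i] nn] s0] .
    thus "Nb i \<subseteq> M" using Nb[OF i] unfolding M_def by auto
    have "t * (dd i * y i + (\<Sum>j\<in>Nb i. y j)) = t * (cq * y i)"
      using e3 by (simp add: sum_distrib_left algebra_simps)
    thus "dd i * y i + (\<Sum>j\<in>Nb i. y j) = cq * y i" using tpos by simp
  qed
  show "\<exists>M. M \<noteq> {} \<and> M \<subseteq> {..<n} \<and> (\<forall>i\<in>M. Nb i \<subseteq> M)
            \<and> (\<forall>i\<in>M. dd i * y i + (\<Sum>j\<in>Nb i. y j) = cq * y i)"
  proof -
    have "M \<noteq> {}" using i0M by auto
    moreover have "M \<subseteq> {..<n}" unfolding M_def by auto
    ultimately show ?thesis using closed eqM by blast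
  qed
qed

definition Nb :: "nat \<Rightarrow> (nat \<Rightarrow> nat \<Rightarrow> bool) \<Rightarrow> nat \<Rightarrow> nat set" where
  "Nb n E i = {j. j < n \<and> E i j}"

definition PP :: "(nat \<Rightarrow> nat \<Rightarrow> bool) \<Rightarrow> nat set \<Rightarrow> nat" where
  "PP E U = card {(a,b). a \<in> U \<and> b \<in> U \<and> E a b}"

lemma Nb_fin[simp]: "finite (Nb n E i)" unfolding Nb_def by auto

lemma deg_Nb: "degree n E i = card (Nb n E i)" unfolding degree_def Nb_def by simp

lemma sg_props:
  assumes "simple_graph n E"
  shows "E u v \<Longrightarrow> u < n" "E u v \<Longrightarrow> v < n" "E u v \<Longrightarrow> E v u" "\<not> E u u"
  using assms unfolding simple_graph_def by blast+

lemma deg_le: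
  assumes sg: "simple_graph n E" and i: "i < n"
  shows "degree n E i \<le> n - 1"
proof -
  have "Nb n E i \<subseteq> {0..<n} - {i}" using sg_props[OF sg] unfolding Nb_def by auto
  hence "card (Nb n E i) \<le> card ({0..<n} - {i})" by (intro card_mono) auto
  thus ?thesis using i by (simp add: deg_Nb)
qed

lemma PP_fin: "finite U \<Longrightarrow> finite {(a,b). a \<in> U \<and> b \<in> U \<and> E a b}"
  by (rule finite_subset[of _ "U \<times> U"]) auto

lemma PP_remove:
  assumes sg: "simple_graph n E" and U: "finite U" and v: "v \<in> U"
  shows "PP E U = PP E (U - {v}) + 2 * card {u\<in>U. E v u}"
proof -
  let ?S = "{(a,b). a \<in> U \<and> b \<in> U \<and> E a b}"
  let ?S' = "{(a,b). a \<in> U - {v} \<and> b \<in> U - {v} \<and> E a b}"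
  let ?N = "{u\<in>U. E v u}"
  let ?X = "Pair v ` ?N"
  let ?Y = "(\<lambda>a. (a, v)) ` ?N"
  have irr: "\<not> E v v" using sg_props[OF sg] by blast
  have "?S = ?S' \<union> (?X \<union> ?Y)" using v sg_props(3)[OF sg] by auto
  moreover have "?X \<inter> ?Y = {}" using irr by auto
  moreover have "?S' \<inter> (?X \<union> ?Y) = {}" by auto
  moreover have fN: "finite ?N" using U by auto
  moreover have "card ?X = card ?N" by (rule card_image) (auto simp: inj_on_def)
  moreover have "card ?Y = card ?N" by (rule card_image) (auto simp: inj_on_def)
  moreover have "finite ?S'" using PP_fin[of "U - {v}" E] U by simp
  ultimately show ?thesis unfolding PP_def
    by (simp add: card_Un_disjoint)
qed

lemma PP_sq:
  assumes sg: "simple_graph n E" and U: "finite U"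
  shows "PP E U + card U \<le> card U * card U"
proof -
  let ?S = "{(a,b). a \<in> U \<and> b \<in> U \<and> E a b}"
  let ?D = "(\<lambda>a. (a,a)) ` U"
  have "?S \<subseteq> U \<times> U - ?D" using sg_props(4)[OF sg] by auto
  hence "card ?S \<le> card (U \<times> U - ?D)" using U by (intro card_mono) auto
  also have "\<dots> = card (U \<times> U) - card ?D" by (rule card_Diff_subset) (use U in auto)
  also have "card ?D = card U" by (rule card_image) (auto simp: inj_on_def)
  finally have "card ?S \<le> card U * card U - card U" by (simp add: card_cartesian_product)
  moreover have "card U \<le> card U * card U" by (cases "card U") auto
  ultimately show ?thesis unfolding PP_def by linarith
qed

lemma degen_bound:
  assumes sg: "simple_graph n E" and dg: "degenerate k n E"
  shows "U \<subseteq> {0..<n} \<Longrightarrow> card U = k + m \<Longrightarrow> PP E U + k * (k + 1) \<le> 2 * k * card U"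
proof (induction m arbitrary: U)
  case 0
  have fU: "finite U" using 0 finite_subset by blast
  have "PP E U + card U \<le> card U * card U" by (rule PP_sq[OF sg fU])
  thus ?case using 0 by (simp add: algebra_simps)
next
  case (Suc m)
  have fU: "finite U" using Suc finite_subset by blast
  have ne: "U \<noteq> {}" using Suc by auto
  have "\<exists>v\<in>U. card {u \<in> U. (\<lambda>a b. E a b \<and> a \<in> U \<and> b \<in> U) v u} \<le> k"
    using dg Suc.prems(1) ne unfolding degenerate_def
    by (elim allE[of _ U] allE[of _ "\<lambda>a b. E a b \<and> a \<in> U \<and> b \<in> U"])
       (use sg_props(3)[OF sg] in auto)
  then obtain w where w: "w \<in> U" and cw: "card {u \<in> U. E w u \<and> w \<in> U \<and> u \<in> U} \<le> k" by auto
  have "{u \<in> U. E w u \<and> w \<in> U \<and> u \<in> U} = {u\<in>U. E w u}" using w by auto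
  with cw have cw': "card {u\<in>U. E w u} \<le> k" by simp
  have IH: "PP E (U - {w}) + k * (k + 1) \<le> 2 * k * card (U - {w})"
    using Suc.prems w fU by (intro Suc.IH) auto
  have cU: "card (U - {w}) = k + m" using Suc.prems w fU by simp
  have "PP E U = PP E (U - {w}) + 2 * card {u\<in>U. E w u}" by (rule PP_remove[OF sg fU w])
  thus ?case using IH cw' cU Suc.prems(2) by (simp add: algebra_simps)
qed

lemma degen_bound':
  assumes sg: "simple_graph n E" and dg: "degenerate k n E"
    and U: "U \<subseteq> {0..<n}" and kU: "k \<le> card U"
  shows "PP E U + k * (k + 1) \<le> 2 * k * card U"
  using degen_bound[OF sg dg U, of "card U - k"] kU by simp

lemma sumdeg_H:
  assumes sg: "simple_graph n E" and u: "u < n" and H: "H \<subseteq> Nb n E u"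
  shows "2 * (\<Sum>w\<in>H. degree n E w) + 2 * degree n E u \<le> PP E (insert u H) + PP E {0..<n}"
proof -
  let ?V = "{0..<n}"
  have fH: "finite H" using H finite_subset Nb_fin by blast
  have uH: "u \<notin> H" using H sg_props(4)[OF sg] unfolding Nb_def by auto
  have HV: "H \<subseteq> ?V" using H unfolding Nb_def by auto
  have Hadj: "\<And>w. w \<in> H \<Longrightarrow> E u w \<and> E w u" using H sg_props(3)[OF sg] unfolding Nb_def by auto
  define A where "A = Sigma H (Nb n E)"
  have cA: "card A = (\<Sum>w\<in>H. degree n E w)"
    unfolding A_def using fH by (simp add: card_SigmaI deg_Nb)
  define A1 where "A1 = {p\<in>A. snd p = u}"
  define A2 where "A2 = {p\<in>A. snd p \<noteq> u}"
  have fA: "finite A" unfolding A_def using fH by auto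
  have "A = A1 \<union> A2" "A1 \<inter> A2 = {}" unfolding A1_def A2_def by auto
  hence cA12: "card A = card A1 + card A2" using fA
    by (metis A1_def A2_def card_Un_disjoint finite_Un)
  have "A1 = (\<lambda>w. (w,u)) ` H" unfolding A1_def A_def Nb_def using Hadj u by auto
  hence cA1: "card A1 = card H" by (simp add: card_image inj_on_def)
  let ?B = "prod.swap ` A2"
  have fA2: "finite A2" using fA unfolding A2_def by auto
  have cB: "card ?B = card A2" by (rule card_image) (auto simp: inj_on_def)
  have fB: "finite ?B" using fA2 by simp
  have UI: "card (A2 \<union> ?B) + card (A2 \<inter> ?B) = card A2 + card ?B"
    by (rule card_Un_Int[OF fA2 fB, symmetric])
  have "A2 \<union> ?B \<subseteq> {(a,b). a \<in> ?V - {u} \<and> b \<in> ?V - {u} \<and> E a b}"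
    unfolding A2_def A_def Nb_def using HV uH sg_props(3)[OF sg] by auto
  moreover have "finite {(a,b). a \<in> ?V - {u} \<and> b \<in> ?V - {u} \<and> E a b}" by (rule PP_fin) simp
  ultimately have c1: "card (A2 \<union> ?B) \<le> PP E (?V - {u})" unfolding PP_def
    by (intro card_mono)
  have "A2 \<inter> ?B \<subseteq> {(a,b). a \<in> H \<and> b \<in> H \<and> E a b}"
    unfolding A2_def A_def Nb_def by auto
  moreover have "finite {(a,b). a \<in> H \<and> b \<in> H \<and> E a b}" by (rule PP_fin[OF fH])
  ultimately have c2: "card (A2 \<inter> ?B) \<le> PP E H" unfolding PP_def
    by (intro card_mono)
  have "PP E ?V = PP E (?V - {u}) + 2 * card {w\<in>?V. E u w}"
    by (rule PP_remove[OF sg]) (use u in auto)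
  moreover have "{w\<in>?V. E u w} = Nb n E u" unfolding Nb_def by auto
  ultimately have pv: "PP E ?V = PP E (?V - {u}) + 2 * degree n E u" by (simp add: deg_Nb)
  have "PP E (insert u H) = PP E (insert u H - {u}) + 2 * card {w\<in>insert u H. E u w}"
    by (rule PP_remove[OF sg]) (use fH in auto)
  moreover have "insert u H - {u} = H" using uH by auto
  moreover have "{w\<in>insert u H. E u w} = H" using Hadj sg_props(4)[OF sg] by auto
  ultimately have ph: "PP E (insert u H) = PP E H + 2 * card H" by simp
  show ?thesis using cA cA12 cA1 cB UI c1 c2 pv ph by linarith
qed

locale dgs =
  fixes n k :: nat and E :: "nat \<Rightarrow> nat \<Rightarrow> bool" and q :: real
  assumes sg: "simple_graph n E" and dg: "degenerate k n E"
    and k1: "1 \<le> k" and kn: "k < n"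
    and qeq: "q * q = (real n + 2 * real k - 2) * q - 2 * real k * (real k - 1)"
    and qge: "q \<ge> (real n + 2 * real k - 2) / 2"
begin

definition c :: real where "c = (q - (real n + 2 * real k - 2)) / 2"
definition D :: "nat \<Rightarrow> nat" where "D i = max (degree n E i) k"
definition y :: "nat \<Rightarrow> real" where "y i = real (D i) + c"
definition T :: "nat \<Rightarrow> real" where "T i = (\<Sum>j\<in>Nb n E i. real (D j))"

lemma qc: "q * c = - (real k * (real k - 1))"
proof -
  have "q * c = (q * q - (real n + 2 * real k - 2) * q) / 2" unfolding c_def by (simp add: algebra_simps)
  also have "\<dots> = - (real k * (real k - 1))" unfolding qeq by (simp add: field_simps)
  finally show ?thesis .
qed

lemma qpos: "q > real k - 1" "q > 0"
  using qge k1 kn by auto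

lemma kc: "real k + c > 0"
proof -
  have "q * (real k + c) = real k * (q - real k + 1)" using qc by (simp add: algebra_simps)
  moreover have "real k * (q - real k + 1) > 0" using qpos k1 by simp
  ultimately have "q * (real k + c) > 0" by simp
  thus ?thesis using qpos(2) by (simp add: zero_less_mult_iff)
qed

lemma ypos: "y i > 0"
proof -
  have "real (D i) \<ge> real k" unfolding D_def by simp
  thus ?thesis unfolding y_def using kc by linarith
qed

lemma deg_le': "i < n \<Longrightarrow> degree n E i \<le> n - 1" by (rule deg_le[OF sg])

lemma deg_real: "i < n \<Longrightarrow> real (degree n E i) \<le> real n - 1"
proof -
  assume "i < n"
  hence "degree n E i \<le> n - 1" by (rule deg_le')
  hence "real (degree n E i) \<le> real (n - 1)" by (simp only: of_nat_le_iff)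
  thus ?thesis using kn by (simp add: of_nat_diff)
qed

lemma D_le: "i < n \<Longrightarrow> D i \<le> n - 1" unfolding D_def using deg_le' kn by auto

lemma Nb_sub: "Nb n E i \<subseteq> {..<n}" unfolding Nb_def by auto

lemma T1: "i < n \<Longrightarrow> T i \<le> real (degree n E i) * (real n - 1)"
proof -
  assume i: "i < n"
  have "T i \<le> (\<Sum>j\<in>Nb n E i. real n - 1)" unfolding T_def
    by (rule sum_mono) (use D_le kn in \<open>force simp: Nb_def\<close>)
  thus ?thesis by (simp add: deg_Nb)
qed

lemma T1_eq: "i < n \<Longrightarrow> T i = real (degree n E i) * (real n - 1) \<Longrightarrow> (\<forall>j\<in>Nb n E i. D j = n - 1)"
proof (rule ccontr)
  assume i: "i < n" and eq: "T i = real (degree n E i) * (real n - 1)"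
    and ne: "\<not> (\<forall>j\<in>Nb n E i. D j = n - 1)"
  then obtain j where j: "j \<in> Nb n E i" "D j \<noteq> n - 1" by auto
  have jn: "j < n" using j unfolding Nb_def by auto
  have "T i < (\<Sum>j\<in>Nb n E i. real n - 1)" unfolding T_def
  proof (rule sum_strict_mono_ex1)
    show "\<forall>x\<in>Nb n E i. real (D x) \<le> real n - 1" using D_le kn by (force simp: Nb_def)
    show "\<exists>a\<in>Nb n E i. real (D a) < real n - 1" using j D_le[OF jn] kn
      by (intro bexI[OF _ j(1)]) linarith
  qed simp
  thus False using eq by (simp add: deg_Nb)
qed

lemma T2:
  assumes i: "i < n" and kd: "k \<le> degree n E i"
  shows "T i \<le> (real k - 1) * real (degree n E i) + real k * real n - real k * real k"
proof -
  define d where "d = degree n E i"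
  define H where "H = {w\<in>Nb n E i. k \<le> degree n E w}"
  define L where "L = Nb n E i - H"
  define h where "h = card H"
  have HN: "H \<subseteq> Nb n E i" unfolding H_def by auto
  have fH: "finite H" using HN by (rule finite_subset) simp
  have fL: "finite L" unfolding L_def by simp
  have cL: "card L = d - h" unfolding L_def d_def h_def deg_Nb
    by (rule card_Diff_subset[OF fH HN])
  have hd: "h \<le> d" unfolding h_def d_def deg_Nb by (rule card_mono[OF _ HN]) simp
  have split: "Nb n E i = H \<union> L" "H \<inter> L = {}" unfolding L_def using HN by auto
  have "T i = (\<Sum>j\<in>H. real (D j)) + (\<Sum>j\<in>L. real (D j))"
    unfolding T_def split(1) by (rule sum.union_disjoint[OF fH fL split(2)])
  moreover have "(\<Sum>j\<in>H. real (D j)) = (\<Sum>j\<in>H. real (degree n E j))"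
    by (rule sum.cong) (auto simp: H_def D_def)
  moreover have "(\<Sum>j\<in>L. real (D j)) = (\<Sum>j\<in>L. real k)"
    by (rule sum.cong) (auto simp: H_def L_def D_def)
  ultimately have Teq: "T i = (\<Sum>j\<in>H. real (degree n E j)) + real k * (real d - real h)"
    using cL hd by (simp add: of_nat_diff)
  have dn: "real d \<le> real n - 1" using deg_le'[OF i] kn unfolding d_def by linarith
  show ?thesis
  proof (cases "k \<le> h + 1")
    case True
    have sd: "2 * (\<Sum>w\<in>H. degree n E w) + 2 * degree n E i \<le> PP E (insert i H) + PP E {0..<n}"
      by (rule sumdeg_H[OF sg i HN])
    have iH: "i \<notin> H" using HN sg_props(4)[OF sg] unfolding Nb_def by auto
    have cIH: "card (insert i H) = h + 1" using iH fH unfolding h_def by simp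
    have IHV: "insert i H \<subseteq> {0..<n}" using HN i unfolding Nb_def by auto
    have b1: "PP E (insert i H) + k * (k + 1) \<le> 2 * k * (h + 1)"
      using degen_bound'[OF sg dg IHV] cIH True by simp
    have b2: "PP E {0..<n} + k * (k + 1) \<le> 2 * k * n"
      using degen_bound'[OF sg dg, of "{0..<n}"] kn by simp
    have "2 * (\<Sum>w\<in>H. degree n E w) + 2 * d + 2 * (k * (k + 1)) \<le> 2 * k * (h + 1) + 2 * k * n"
      using sd b1 b2 unfolding d_def by linarith
    hence "(\<Sum>w\<in>H. degree n E w) + d + k * (k + 1) \<le> k * (h + 1) + k * n" by linarith
    hence "real ((\<Sum>w\<in>H. degree n E w) + d + k * (k + 1)) \<le> real (k * (h + 1) + k * n)"
      by (simp only: of_nat_le_iff)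
    hence F: "(\<Sum>w\<in>H. real (degree n E w)) + real d + real k * (real k + 1) \<le> real k * (real h + 1) + real k * real n"
      by (simp add: algebra_simps)
    have e1: "real k * (real d - real h) = real k * real d - real k * real h"
      and e2: "real k * (real h + 1) = real k * real h + real k"
      and e3: "(real k - 1) * real d = real k * real d - real d"
      and e4: "real k * (real k + 1) = real k * real k + real k" by (simp_all add: algebra_simps)
    have "T i \<le> (real k - 1) * real d + real k * real n - real k * real k"
      unfolding Teq e1 e3 using F unfolding e2 e4 by linarith
    thus ?thesis unfolding d_def .
  next
    case False
    have "(\<Sum>w\<in>H. real (degree n E w)) \<le> (\<Sum>w\<in>H. real n - 1)"
    proof (rule sum_mono)
      fix w assume "w \<in> H"
      hence "w < n" using HN unfolding Nb_def by auto
      thus "real (degree n E w) \<le> real n - 1" by (rule deg_real)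
    qed
    hence sH: "(\<Sum>w\<in>H. real (degree n E w)) \<le> real h * (real n - 1)" unfolding h_def by simp
    have hk: "real h \<le> real k - 2" using False by linarith
    have nk: "real n - 1 - real k \<ge> 0" using kn by linarith
    have "real h * (real n - 1 - real k) \<le> (real k - 2) * (real n - 1 - real k)"
      by (rule mult_right_mono[OF hk nk])
    hence m: "real h * real n - real h - real h * real k \<le> real k * real n - real k - real k * real k - 2 * real n + 2 + 2 * real k"
      by (simp add: algebra_simps)
    have "T i \<le> real h * (real n - 1) + real k * (real d - real h)" using Teq sH by linarith
    also have "\<dots> = real h * real n - real h - real h * real k + real k * real d" by (simp add: algebra_simps)
    also have "\<dots> \<le> (real k - 1) * real d + real k * real n - real k * real k"
      using m dn kn by (simp add: algebra_simps)
    finally show ?thesis unfolding d_def .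
  qed
qed

lemma sum_y: "(\<Sum>j\<in>Nb n E i. y j) = T i + real (degree n E i) * c"
  unfolding y_def T_def by (simp add: sum.distrib deg_Nb)

lemma key_ident:
  "q * (d + c) - d * (d + c) - d * c - ((real k - 1) * d + real k * real n - real k * real k)
    = (d - real k) * (real n - 1 - d)"
proof -
  have h1: "d * c + d * c = d * q - d * (real n + 2 * real k - 2)" unfolding c_def by (simp add: algebra_simps)
  have "q * (d + c) - d * (d + c) - d * c - ((real k - 1) * d + real k * real n - real k * real k)
     = q * d + q * c - d * d - (d * c + d * c) - ((real k - 1) * d + real k * real n - real k * real k)"
    by (simp add: algebra_simps)
  also have "\<dots> = q * d - real k * (real k - 1) - d * d - (d * q - d * (real n + 2 * real k - 2)) - ((real k - 1) * d + real k * real n - real k * real k)"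
    unfolding h1 qc by simp
  also have "\<dots> = (d - real k) * (real n - 1 - d)" by (simp add: algebra_simps)
  finally show ?thesis .
qed

lemma vineq:
  assumes i: "i < n"
  shows "real (degree n E i) * y i + (\<Sum>j\<in>Nb n E i. y j) \<le> q * y i"
    and "real (degree n E i) * y i + (\<Sum>j\<in>Nb n E i. y j) = q * y i \<Longrightarrow>
           degree n E i = n - 1 \<or> (degree n E i = k \<and> (\<forall>j\<in>Nb n E i. D j = n - 1))"
proof -
  define d where "d = degree n E i"
  have dn: "real d \<le> real n - 1" using deg_le'[OF i] kn unfolding d_def by linarith
  have LHS: "real d * y i + (\<Sum>j\<in>Nb n E i. y j) = real d * y i + T i + real d * c"
    unfolding sum_y d_def by simp
  have res: "(real d * y i + (\<Sum>j\<in>Nb n E i. y j) \<le> q * y i) \<and>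
        (real d * y i + (\<Sum>j\<in>Nb n E i. y j) = q * y i \<longrightarrow> d = n - 1 \<or> (d = k \<and> (\<forall>j\<in>Nb n E i. D j = n - 1)))"
  proof (cases "k \<le> d")
    case True
    have "D i = d" unfolding D_def d_def using True unfolding d_def by simp
    hence yi: "y i = real d + c" unfolding y_def by simp
    have t2: "T i \<le> (real k - 1) * real d + real k * real n - real k * real k"
      using T2[OF i] True unfolding d_def by simp
    have kid: "q * y i - (real d * y i + T i + real d * c)
       \<ge> (real d - real k) * (real n - 1 - real d)"
      using key_ident[of "real d"] t2 unfolding yi by linarith
    have nn: "(real d - real k) * (real n - 1 - real d) \<ge> 0" using True dn by simp
    show ?thesis
    proof (intro conjI impI)
      show "real d * y i + (\<Sum>j\<in>Nb n E i. y j) \<le> q * y i" using LHS kid nn by linarith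
      assume eq: "real d * y i + (\<Sum>j\<in>Nb n E i. y j) = q * y i"
      hence "(real d - real k) * (real n - 1 - real d) \<le> 0" using LHS kid by linarith
      hence z: "(real d - real k) * (real n - 1 - real d) = 0" using nn by linarith
      show "d = n - 1 \<or> (d = k \<and> (\<forall>j\<in>Nb n E i. D j = n - 1))"
      proof (cases "d = k")
        case True
        have z0: "(real d - real k) * (real n - 1 - real d) = 0" using True by simp
        have z1: "(real k - 1) * real d + real k * real n - real k * real k = real d * (real n - 1)"
          using True by (simp add: algebra_simps)
        have "q * y i - (real d * y i + real d * (real n - 1) + real d * c) = 0"
          using key_ident[of "real d"] z0 z1 unfolding yi by linarith
        hence "T i \<ge> real d * (real n - 1)" using eq LHS by linarith
        hence "T i = real d * (real n - 1)" using T1[OF i] unfolding d_def by linarith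
        hence "\<forall>j\<in>Nb n E i. D j = n - 1" using T1_eq[OF i] unfolding d_def by simp
        thus ?thesis using True by simp
      next
        case False
        hence "real d - real k \<noteq> 0" by simp
        hence "real n - 1 - real d = 0" using z by simp
        thus ?thesis using kn by linarith
      qed
    qed
  next
    case False
    have "D i = k" unfolding D_def d_def using False unfolding d_def by simp
    hence yi: "y i = real k + c" unfolding y_def by simp
    have t1: "T i \<le> real d * (real n - 1)" using T1[OF i] unfolding d_def .
    have e1: "real d * y i + T i + real d * c \<le> real d * (q - real k + 1)"
    proof -
      have "real d * y i + T i + real d * c \<le> real d * (real k + c) + real d * (real n - 1) + real d * c"
        using t1 unfolding yi by linarith
      also have "\<dots> = real d * (real k + real n - 1 + 2 * c)" by (simp add: algebra_simps)
      also have "real k + real n - 1 + 2 * c = q - real k + 1" unfolding c_def by (simp add: field_simps)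
      finally show ?thesis .
    qed
    have dk: "real d \<le> real k - 1" using False by linarith
    have "real d * (q - real k + 1) \<le> (real k - 1) * (q - real k + 1)"
      by (rule mult_right_mono[OF dk]) (use qpos in linarith)
    also have "\<dots> < real k * (q - real k + 1)" using qpos by simp
    also have "real k * (q - real k + 1) = q * y i" unfolding yi using qc by (simp add: algebra_simps)
    finally have "real d * y i + (\<Sum>j\<in>Nb n E i. y j) < q * y i" using e1 LHS by linarith
    thus ?thesis by simp
  qed
  show "real (degree n E i) * y i + (\<Sum>j\<in>Nb n E i. y j) \<le> q * y i" using res d_def by simp
  show "real (degree n E i) * y i + (\<Sum>j\<in>Nb n E i. y j) = q * y i \<Longrightarrow>
           degree n E i = n - 1 \<or> (degree n E i = k \<and> (\<forall>j\<in>Nb n E i. D j = n - 1))"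
    using res d_def by simp
qed

end

lemma univ:
  assumes sg: "simple_graph n E" and u: "u < n" and du: "degree n E u = n - 1"
  shows "v < n \<Longrightarrow> v \<noteq> u \<Longrightarrow> E u v"
proof -
  assume v: "v < n" "v \<noteq> u"
  have sub: "Nb n E u \<subseteq> {0..<n} - {u}" using sg_props(4)[OF sg, of u] unfolding Nb_def by auto
  have "card (Nb n E u) = card ({0..<n} - {u})" using du u by (simp add: deg_Nb)
  hence "Nb n E u = {0..<n} - {u}" by (rule card_subset_eq[rotated 1, OF sub]) simp
  hence "v \<in> Nb n E u" using v by simp
  thus "E u v" unfolding Nb_def by simp
qed

lemma iso_construct:
  assumes sg: "simple_graph n E" and kn: "k \<le> n"
    and A: "A \<subseteq> {0..<n}" and cA: "card A = k"
    and char: "\<And>u v. u < n \<Longrightarrow> v < n \<Longrightarrow> E u v \<longleftrightarrow> u \<noteq> v \<and> (u \<in> A \<or> v \<in> A)"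
  shows "graph_iso n E (S_graph n k)"
proof -
  define B where "B = {0..<n} - A"
  have fA: "finite A" using A by (rule finite_subset) simp
  have cB: "card B = n - k" unfolding B_def using A cA by (simp add: card_Diff_subset fA)
  obtain g where g: "bij_betw g A {0..<k}"
    using finite_same_card_bij[OF fA _, of "{0..<k}"] cA by auto
  obtain h where h: "bij_betw h B {k..<n}"
    using finite_same_card_bij[of B "{k..<n}"] cB unfolding B_def by auto
  define f where "f x = (if x \<in> A then g x else h x)" for x
  have fg: "bij_betw f A {0..<k}" using g by (rule iffD1[OF bij_betw_cong, rotated]) (simp add: f_def)
  have fh: "bij_betw f B {k..<n}" using h by (rule iffD1[OF bij_betw_cong, rotated]) (simp add: f_def B_def)
  have fb: "bij_betw f (A \<union> B) ({0..<k} \<union> {k..<n})"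
    by (rule bij_betw_combine[OF fg fh]) auto
  have AB: "A \<union> B = {0..<n}" unfolding B_def using A by auto
  have KN: "{0..<k} \<union> {k..<n} = {0..<n}" using kn by auto
  have f: "bij_betw f {0..<n} {0..<n}" using fb unfolding AB KN .
  have fA': "\<And>x. x < n \<Longrightarrow> f x < k \<longleftrightarrow> x \<in> A"
  proof -
    fix x assume x: "x < n"
    show "f x < k \<longleftrightarrow> x \<in> A"
    proof (cases "x \<in> A")
      case True thus ?thesis using bij_betwE[OF fg] by auto
    next
      case False
      hence "x \<in> B" unfolding B_def using x by auto
      thus ?thesis using bij_betwE[OF fh] False by fastforce
    qed
  qed
  have fn: "\<And>x. x < n \<Longrightarrow> f x < n" using bij_betwE[OF f] by auto
  have finj: "\<And>x y. x < n \<Longrightarrow> y < n \<Longrightarrow> f x = f y \<longleftrightarrow> x = y"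
    using f unfolding bij_betw_def inj_on_def by auto
  show ?thesis unfolding graph_iso_def
  proof (intro exI conjI allI impI)
    show "bij_betw f {0..<n} {0..<n}" by (rule f)
    fix u v assume u: "u < n" and v: "v < n"
    have "S_graph n k (f u) (f v) \<longleftrightarrow> (u \<noteq> v \<and> (u \<in> A \<or> v \<in> A))"
      unfolding S_graph_def using fn[OF u] fn[OF v] finj[OF u v] fA'[OF u] fA'[OF v] by simp
    thus "E u v = S_graph n k (f u) (f v)" using char[OF u v] by simp
  qed
qed

lemma iso_case2:
  assumes sg: "simple_graph n E" and dg: "degenerate k n E" and kn: "k < n" and kne: "k \<noteq> n - 1"
    and P: "\<And>v. v < n \<Longrightarrow> degree n E v = n - 1 \<or> (degree n E v = k \<and> (\<forall>j\<in>Nb n E v. max (degree n E j) k = n - 1))"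
  shows "graph_iso n E (S_graph n k)"
proof -
    define A where "A = {v. v < n \<and> degree n E v = n - 1}"
    have nonA: "Nb n E v \<subseteq> A \<and> degree n E v = k" if v: "v < n" "v \<notin> A" for v
    proof -
      have dne: "degree n E v \<noteq> n - 1" using v unfolding A_def by simp
      have dv: "degree n E v = k" and allj: "\<forall>j\<in>Nb n E v. max (degree n E j) k = n - 1"
        using P[OF v(1)] dne by simp_all
      have "Nb n E v \<subseteq> A"
      proof
        fix j assume j: "j \<in> Nb n E v"
        hence "max (degree n E j) k = n - 1" using allj by simp
        hence "degree n E j = n - 1" using kne by (simp add: max_def split: if_splits)
        moreover have "j < n" using j unfolding Nb_def by simp
        ultimately show "j \<in> A" unfolding A_def by simp
      qed
      thus ?thesis using dv by simp
    qed
    have exb: "\<exists>b. b < n \<and> b \<notin> A"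
    proof (rule ccontr)
      assume "\<not> ?thesis"
      hence allA: "\<And>v. v < n \<Longrightarrow> v \<in> A" by simp
      have ne: "{0..<n} \<noteq> {}" using kn by auto
      have "\<exists>v\<in>{0..<n}. card {u \<in> {0..<n}. E v u} \<le> k"
      proof (rule dg[unfolded degenerate_def, rule_format, of "{0..<n}" E])
        show "{0..<n} \<subseteq> {0..<n}" by simp
        show "{0..<n} \<noteq> {}" by (rule ne)
        fix u v assume e: "E u v"
        show "E u v \<and> u \<in> {0..<n} \<and> v \<in> {0..<n}"
          using e sg_props(1)[OF sg e] sg_props(2)[OF sg e] by simp
        show "E v u" by (rule sg_props(3)[OF sg e])
      qed
      then obtain v where v: "v < n" and cv: "card {u \<in> {0..<n}. E v u} \<le> k" by auto
      have "{u \<in> {0..<n}. E v u} = Nb n E v" unfolding Nb_def by auto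
      hence "degree n E v \<le> k" using cv by (simp add: deg_Nb)
      moreover have "degree n E v = n - 1" using allA[OF v] unfolding A_def by simp
      ultimately show False using kne kn by simp
    qed
    then obtain b where b: "b < n" "b \<notin> A" by blast
    have NbA: "Nb n E b = A"
    proof
      show "Nb n E b \<subseteq> A" using nonA[OF b] by simp
      show "A \<subseteq> Nb n E b"
      proof
        fix a assume a: "a \<in> A"
        hence an: "a < n" and ad: "degree n E a = n - 1" unfolding A_def by auto
        have "a \<noteq> b" using a b by auto
        hence "E a b" using univ[OF sg an ad b(1)] by simp
        hence "E b a" by (rule sg_props(3)[OF sg])
        thus "a \<in> Nb n E b" using an unfolding Nb_def by simp
      qed
    qed
    have cA: "card A = k" using nonA[OF b] NbA by (simp add: deg_Nb)
    have AV: "A \<subseteq> {0..<n}" unfolding A_def by auto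
    have char: "E u v \<longleftrightarrow> u \<noteq> v \<and> (u \<in> A \<or> v \<in> A)" if u: "u < n" and v: "v < n" for u v
    proof
      assume e: "E u v"
      have "u \<noteq> v" using e sg_props(4)[OF sg, of u] by auto
      moreover have "u \<in> A \<or> v \<in> A"
      proof (cases "u \<in> A")
        case False
        hence "Nb n E u \<subseteq> A" using nonA[OF u] by simp
        moreover have "v \<in> Nb n E u" using e v unfolding Nb_def by simp
        ultimately show ?thesis by auto
      qed simp
      ultimately show "u \<noteq> v \<and> (u \<in> A \<or> v \<in> A)" by simp
    next
      assume r: "u \<noteq> v \<and> (u \<in> A \<or> v \<in> A)"
      show "E u v"
      proof (cases "u \<in> A")
        case True
        hence "degree n E u = n - 1" unfolding A_def by simp
        thus ?thesis using univ[OF sg u _ v] r by simp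
      next
        case False
        hence "v \<in> A" using r by simp
        hence "degree n E v = n - 1" unfolding A_def by simp
        hence "E v u" using univ[OF sg v _ u] r by simp
        thus ?thesis by (rule sg_props(3)[OF sg])
      qed
    qed
    show ?thesis by (rule iso_construct[OF sg _ AV cA char]) (use kn in simp_all)
qed

context dgs
begin

lemma iso_from_M:
  assumes Mne: "M \<noteq> {}" and Msub: "M \<subseteq> {..<n}" and Mcl: "\<forall>i\<in>M. Nb n E i \<subseteq> M"
    and Mp: "\<forall>i\<in>M. degree n E i = n - 1 \<or> (degree n E i = k \<and> (\<forall>j\<in>Nb n E i. D j = n - 1))"
  shows "graph_iso n E (S_graph n k)"
proof -
  obtain i where iM: "i \<in> M" using Mne by auto
  have i: "i < n" using iM Msub by auto
  obtain w where wM: "w \<in> M" and wd: "degree n E w = n - 1"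
  proof (cases "degree n E i = n - 1")
    case True thus ?thesis using that iM by blast
  next
    case False
    hence di: "degree n E i = k" and allj: "\<forall>j\<in>Nb n E i. D j = n - 1" using Mp iM by auto
    have "card (Nb n E i) \<ge> 1" using di k1 by (simp add: deg_Nb)
    then obtain j where j: "j \<in> Nb n E i" by (metis card.empty ex_in_conv not_one_le_zero)
    have "D j = n - 1" using allj j by auto
    moreover have "k \<noteq> n - 1" using False di by simp
    ultimately have "degree n E j = n - 1" unfolding D_def by (auto simp: max_def split: if_splits)
    moreover have "j \<in> M" using Mcl iM j by auto
    ultimately show ?thesis using that by blast
  qed
  have w: "w < n" using wM Msub by auto
  have allM: "v \<in> M" if v: "v < n" for v
  proof (cases "v = w")
    case True thus ?thesis using wM by simp
  next
    case False
    hence "E w v" using univ[OF sg w wd v] by simp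
    hence "v \<in> Nb n E w" using v unfolding Nb_def by simp
    thus ?thesis using Mcl wM by auto
  qed
  have P: "degree n E v = n - 1 \<or> (degree n E v = k \<and> (\<forall>j\<in>Nb n E v. D j = n - 1))" if "v < n" for v
    using Mp allM[OF that] by blast
  show ?thesis
  proof (cases "k = n - 1")
    case True
    have dall: "degree n E v = n - 1" if "v < n" for v using P[OF that] True by auto
    show ?thesis
    proof (rule iso_construct[OF sg _ _ _ ])
      show "k \<le> n" using kn by simp
      show "{0..<k} \<subseteq> {0..<n}" using kn by auto
      show "card {0..<k} = k" by simp
      fix u v assume u: "u < n" and v: "v < n"
      show "E u v \<longleftrightarrow> u \<noteq> v \<and> (u \<in> {0..<k} \<or> v \<in> {0..<k})"
      proof
        assume e: "E u v"
        hence "u \<noteq> v" using sg_props(4)[OF sg, of u] by auto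
        thus "u \<noteq> v \<and> (u \<in> {0..<k} \<or> v \<in> {0..<k})" using True u v by auto
      next
        assume "u \<noteq> v \<and> (u \<in> {0..<k} \<or> v \<in> {0..<k})"
        thus "E u v" using univ[OF sg u dall[OF u] v] by auto
      qed
    qed
  next
    case False
    show ?thesis
    proof (rule iso_case2[OF sg dg kn False])
      fix v assume "v < n"
      thus "degree n E v = n - 1 \<or> (degree n E v = k \<and> (\<forall>j\<in>Nb n E v. max (degree n E j) k = n - 1))"
        using P unfolding D_def by blast
    qed
  qed
qed

end

context dgs
begin

lemma S_nb1: "i < k \<Longrightarrow> {j. j < n \<and> S_graph n k i j} = {0..<n} - {i}"
  using kn unfolding S_graph_def by auto

lemma S_nb2: "k \<le> i \<Longrightarrow> i < n \<Longrightarrow> {j. j < n \<and> S_graph n k i j} = {0..<k}"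
  using kn unfolding S_graph_def by auto

lemma S_eig: "eigenvalue (signless_laplacian n (S_graph n k)) q"
proof -
  define ys where "ys i = (if i < k then real n - 1 + c else real k + c)" for i
  have nr: "real (n - 1) = real n - 1" using kn by (simp add: of_nat_diff)
  have sumall: "(\<Sum>j\<in>{0..<n}. ys j) = real k * (real n - 1 + c) + (real n - real k) * (real k + c)"
  proof -
    have "{0..<n} = {0..<k} \<union> {k..<n}" using kn by auto
    hence "(\<Sum>j\<in>{0..<n}. ys j) = (\<Sum>j\<in>{0..<k}. ys j) + (\<Sum>j\<in>{k..<n}. ys j)"
      by (simp add: sum.union_disjoint)
    also have "(\<Sum>j\<in>{0..<k}. ys j) = (\<Sum>j\<in>{0..<k}. real n - 1 + c)"
      by (rule sum.cong) (auto simp: ys_def)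
    also have "(\<Sum>j\<in>{k..<n}. ys j) = (\<Sum>j\<in>{k..<n}. real k + c)"
      by (rule sum.cong) (auto simp: ys_def)
    finally show ?thesis using kn by (simp add: of_nat_diff)
  qed
  show ?thesis
  proof (rule fun_to_eig[of n ys])
    show "\<exists>i<n. ys i \<noteq> 0"
      using kn k1 kc by (intro exI[of _ 0]) (auto simp: ys_def)
    show "\<forall>i<n. real (degree n (S_graph n k) i) * ys i + (\<Sum>j\<in>{j. j < n \<and> S_graph n k i j}. ys j) = q * ys i"
    proof (intro allI impI)
      fix i assume i: "i < n"
      show "real (degree n (S_graph n k) i) * ys i + (\<Sum>j\<in>{j. j < n \<and> S_graph n k i j}. ys j) = q * ys i"
      proof (cases "i < k")
        case True
        have deg: "degree n (S_graph n k) i = n - 1" unfolding degree_def S_nb1[OF True] using i by simp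
        have yi: "ys i = real n - 1 + c" using True by (simp add: ys_def)
        have "(\<Sum>j\<in>{j. j < n \<and> S_graph n k i j}. ys j) = (\<Sum>j\<in>{0..<n}. ys j) - ys i"
          unfolding S_nb1[OF True] using i by (simp add: sum_diff1)
        also have "\<dots> = real k * (real n - 1 + c) + (real n - real k) * (real k + c) - (real n - 1 + c)"
          unfolding sumall yi ..
        finally have s: "(\<Sum>j\<in>{j. j < n \<and> S_graph n k i j}. ys j) = real k * (real n - 1 + c) + (real n - real k) * (real k + c) - (real n - 1 + c)" .
        have ki: "q * (real n - 1 + c) - (real n - 1) * (real n - 1 + c) - (real n - 1) * c
           - ((real k - 1) * (real n - 1) + real k * real n - real k * real k) = 0"
          using key_ident[of "real n - 1"] by simp
        have degr: "real (degree n (S_graph n k) i) = real n - 1" using deg nr by simp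
        show ?thesis unfolding degr s yi using ki by (simp add: algebra_simps)
      next
        case False
        have nbs: "{j. j < n \<and> S_graph n k i j} = {0..<k}" using S_nb2[of i] False i by simp
        have deg: "degree n (S_graph n k) i = k" unfolding degree_def nbs by simp
        have yi: "ys i = real k + c" using False by (simp add: ys_def)
        have "(\<Sum>j\<in>{j. j < n \<and> S_graph n k i j}. ys j) = (\<Sum>j\<in>{0..<k}. real n - 1 + c)"
          unfolding nbs by (intro sum.cong) (auto simp: ys_def)
        hence s: "(\<Sum>j\<in>{j. j < n \<and> S_graph n k i j}. ys j) = real k * (real n - 1 + c)" by simp
        have ki: "q * (real k + c) - real k * (real k + c) - real k * c
           - ((real k - 1) * real k + real k * real n - real k * real k) = 0"
          using key_ident[of "real k"] by simp
        show ?thesis unfolding deg s yi using ki by (simp add: algebra_simps)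
      qed
    qed
  qed
qed

lemma E_eig_lt:
  assumes ni: "\<not> graph_iso n E (S_graph n k)" and ev: "eigenvalue (signless_laplacian n E) lam"
  shows "lam < q"
proof -
  obtain x where nz: "\<exists>i<n. x i \<noteq> 0"
    and eq: "\<forall>i<n. real (degree n E i) * x i + (\<Sum>j\<in>{j. j<n \<and> E i j}. x j) = lam * x i"
    using eig_to_fun[OF ev] by blast
  have eq': "\<And>i. i < n \<Longrightarrow> real (degree n E i) * x i + (\<Sum>j\<in>Nb n E i. x j) = lam * x i"
    using eq unfolding Nb_def by blast
  have ineq: "\<And>i. i < n \<Longrightarrow> real (degree n E i) * y i + (\<Sum>j\<in>Nb n E i. y j) \<le> q * y i"
    by (rule vineq(1))
  have dd': "\<And>i. i < n \<Longrightarrow> 0 \<le> real (degree n E i)" by simp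
  have yp': "\<And>i. i < n \<Longrightarrow> y i > 0" using ypos by simp
  have nb': "\<And>i. i < n \<Longrightarrow> Nb n E i \<subseteq> {..<n}" using Nb_sub by simp
  have le: "lam \<le> q" using CW(1)[OF nb' dd' yp' ineq nz eq'] .
  have "lam \<noteq> q"
  proof
    assume lq: "lam = q"
    obtain M where M: "M \<noteq> {}" "M \<subseteq> {..<n}" "\<forall>i\<in>M. Nb n E i \<subseteq> M"
      "\<forall>i\<in>M. real (degree n E i) * y i + (\<Sum>j\<in>Nb n E i. y j) = q * y i"
      using CW(2)[OF nb' dd' yp' ineq nz eq' lq] by blast
    have "\<forall>i\<in>M. degree n E i = n - 1 \<or> (degree n E i = k \<and> (\<forall>j\<in>Nb n E i. D j = n - 1))"
    proof
      fix i assume iM: "i \<in> M"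
      hence i: "i < n" using M(2) by auto
      show "degree n E i = n - 1 \<or> (degree n E i = k \<and> (\<forall>j\<in>Nb n E i. D j = n - 1))"
        by (rule vineq(2)[OF i]) (use M(4) iM in blast)
    qed
    hence "graph_iso n E (S_graph n k)" using iso_from_M[OF M(1-3)] by blast
    thus False using ni by simp
  qed
  thus ?thesis using le by simp
qed

end

lemma SL_sym: "simple_graph n E \<Longrightarrow> i < n \<Longrightarrow> j < n \<Longrightarrow>
   signless_laplacian n E $$ (i,j) = signless_laplacian n E $$ (j,i)"
  unfolding signless_laplacian_def using sg_props(3)[of n E i j] sg_props(3)[of n E j i] by auto

lemma eigset_fin: "finite {x. eigenvalue (signless_laplacian n E) x}"
  using card_finite_spectrum(1)[OF SL_carrier[of n E]] unfolding spectrum_def by simp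

lemma main:
  assumes k1: "1 \<le> k" and kn: "k < n" and sg: "simple_graph n E" and dg: "degenerate k n E"
    and ni: "\<not> graph_iso n E (S_graph n k)"
  shows "q_index n E < q_index n (S_graph n k)"
proof -
  define N where "N = real n + 2 * real k - 2"
  have Nk: "N \<ge> 3 * real k - 1" unfolding N_def using kn by simp
  have disc: "N * N - 8 * real k * (real k - 1) \<ge> 0"
  proof -
    have a: "N * N \<ge> (3 * real k - 1) * (3 * real k - 1)"
      using Nk k1 by (intro mult_mono) auto
    have b: "(3 * real k - 1) * (3 * real k - 1) = 9 * (real k * real k) - 6 * real k + 1"
      by (simp add: algebra_simps)
    have c: "8 * real k * (real k - 1) = 8 * (real k * real k) - 8 * real k"
      by (simp add: algebra_simps)
    have d: "real k * real k \<ge> 0" by simp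
    show ?thesis using a b c d k1 by linarith
  qed
  define s where "s = sqrt (N * N - 8 * real k * (real k - 1))"
  have s0: "s \<ge> 0" unfolding s_def by (rule real_sqrt_ge_zero[OF disc])
  have ss: "s * s = N * N - 8 * real k * (real k - 1)" unfolding s_def real_sqrt_mult_self
    using disc by simp
  define q where "q = (N + s) / 2"
  have qeq: "q * q = (real n + 2 * real k - 2) * q - 2 * real k * (real k - 1)"
    unfolding q_def N_def[symmetric] using ss by (simp add: field_simps power2_eq_square)
  have qge: "q \<ge> (real n + 2 * real k - 2) / 2" unfolding q_def N_def[symmetric] using s0 by simp
  interpret dgs n k E q using sg dg k1 kn qeq qge by unfold_locales auto
  let ?EV = "{x. eigenvalue (signless_laplacian n E) x}"
  let ?SV = "{x. eigenvalue (signless_laplacian n (S_graph n k)) x}"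
  have ne: "?EV \<noteq> {}"
    using sym_real_eig_exists[OF SL_carrier[of n E] _ SL_sym[OF sg]] kn by auto
  have "Max ?EV \<in> ?EV" by (rule Max_in[OF eigset_fin ne])
  hence lt: "Max ?EV < q" using E_eig_lt[OF ni] by simp
  have "q \<le> Max ?SV" by (rule Max_ge[OF eigset_fin]) (use S_eig in simp)
  thus ?thesis unfolding q_index_def using lt by linarith
qed

lemma no_edge_iso:
  assumes "\<And>u v. u < n \<Longrightarrow> v < n \<Longrightarrow> \<not> E u v"
    and "\<And>u v. u < n \<Longrightarrow> v < n \<Longrightarrow> \<not> S_graph n k u v"
  shows "graph_iso n E (S_graph n k)"
  unfolding graph_iso_def
proof (intro exI conjI allI impI)
  show "bij_betw id {0..<n} {0..<n}" by simp
  fix u v assume "u < n" "v < n"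
  thus "E u v = S_graph n k (id u) (id v)" using assms by simp
qed

lemma deg0_noedge:
  assumes sg: "simple_graph n E" and dg: "degenerate 0 n E"
  shows "\<not> E u v"
proof
  assume e: "E u v"
  have uv: "u \<noteq> v" using e sg_props(4)[OF sg, of u] by auto
  have un: "u < n" and vn: "v < n" using sg_props(1,2)[OF sg e] by auto
  have ev: "E v u" by (rule sg_props(3)[OF sg e])
  define F where "F a b = ((a = u \<and> b = v) \<or> (a = v \<and> b = u))" for a b
  have "\<exists>w\<in>{u,v}. card {x \<in> {u,v}. F w x} \<le> 0"
  proof (rule dg[unfolded degenerate_def, rule_format, of "{u,v}" F])
    show "{u, v} \<subseteq> {0..<n}" using un vn by auto
    show "{u, v} \<noteq> {}" by simp
    fix a b assume "F a b"
    thus "E a b \<and> a \<in> {u, v} \<and> b \<in> {u, v}" using e ev unfolding F_def by auto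
    show "F b a" using \<open>F a b\<close> unfolding F_def by auto
  qed
  then obtain w where w: "w \<in> {u,v}" and c: "card {x \<in> {u,v}. F w x} \<le> 0" by auto
  have "{x \<in> {u,v}. F w x} = {}" using c by simp
  thus False using w uv unfolding F_def by auto
qed

lemma degen_full:
  assumes sg: "simple_graph n E"
  shows "degenerate (n - 1) n E"
  unfolding degenerate_def
proof (intro allI impI)
  fix U F assume U: "U \<subseteq> {0..<n}" and ne: "U \<noteq> {}"
    and FE: "\<forall>u v. F u v \<longrightarrow> E u v \<and> u \<in> U \<and> v \<in> U"
  obtain v where v: "v \<in> U" using ne by auto
  have fU: "finite U" using U by (rule finite_subset) simp
  have "{u \<in> U. F v u} \<subseteq> U - {v}" using FE sg_props(4)[OF sg, of v] by auto
  hence "card {u \<in> U. F v u} \<le> card (U - {v})" using fU by (intro card_mono) auto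
  also have "\<dots> = card U - 1" using v fU by simp
  also have "card U \<le> n" using card_mono[OF _ U] by simp
  hence "card U - 1 \<le> n - 1" by simp
  finally show "\<exists>v\<in>U. card {u \<in> U. F v u} \<le> n - 1" using v by blast
qed

lemma S_full: "1 \<le> n \<Longrightarrow> S_graph n n = S_graph n (n - 1)"
  unfolding S_graph_def by (intro ext) auto

theorem theorem2:
  fixes n k :: nat and E :: "nat \<Rightarrow> nat \<Rightarrow> bool"
  assumes "k \<le> n"
    and "simple_graph n E"
    and "degenerate k n E"
    and "\<not> graph_iso n E (S_graph n k)"
  shows "q_index n E < q_index n (S_graph n k)"
proof -
  note kn = assms(1) and sg = assms(2) and dg = assms(3) and ni = assms(4)
  show ?thesis
  proof (cases "k = 0")
    case True
    have "graph_iso n E (S_graph n k)"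
      by (rule no_edge_iso) (use deg0_noedge[OF sg dg[unfolded True]] True in \<open>auto simp: S_graph_def\<close>)
    thus ?thesis using ni by simp
  next
    case k0: False
    show ?thesis
    proof (cases "n \<le> 1")
      case True
      have "graph_iso n E (S_graph n k)"
      proof (rule no_edge_iso)
        fix u v assume u: "u < n" and v: "v < n"
        hence "u = v" using True by simp
        thus "\<not> E u v" using sg_props(4)[OF sg] by simp
        show "\<not> S_graph n k u v" using \<open>u = v\<close> unfolding S_graph_def by simp
      qed
      thus ?thesis using ni by simp
    next
      case False
      show ?thesis
      proof (cases "k < n")
        case True
        show ?thesis by (rule main[OF _ True sg dg ni]) (use k0 in simp)
      next
        case kf: False
        hence kk: "k = n" using kn by simp
        have Sf: "S_graph n k = S_graph n (n - 1)" unfolding kk using False by (intro S_full) simp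
        show ?thesis unfolding Sf
          by (rule main[OF _ _ sg degen_full[OF sg]]) (use False ni Sf in auto)
      qed
    qed
  qed
qed

end
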